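(* There exists $C\in(1,\infty)$ such that for all $m,n,k\in\mathbb N$, $$\P\big(\tau^{(m)}_k\ge n\big)\le\Big(\frac{C\,k\,m}{n(\log m+1)}\wedge1\Big)^{n/m}.$$ Equivalently, for all $m\in\mathbb N$ and $s,t\in(0,\infty)$, $\P\big(\tau^{(m)}_{\lfloor s(\log m+1)\rfloor}\ge tm\big)\le e^{-t\log^+(\frac{t}{Cs})}$.
   Context: Positive reals $r(n)=\frac an(1+o(1))$, $a\in(0,\infty)$, $R_m=\sum_{n\le m}r(n)$; $(T^{(m)}_i)$ i.i.d. with $\P(T^{(m)}_i=n)=\frac{r(n)}{R_m}\mathbf1_{\{1,\dots,m\}}(n)$; $\tau^{(m)}_k=\sum_{i\le k}T^{(m)}_i$. $\log^+x=\max(\log x,0)$. *)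

theory Defs
  imports "HOL-Probability.Probability" "HOL-Library.Landau_Symbols"
begin

definition Rsum :: "(nat \<Rightarrow> real) \<Rightarrow> nat \<Rightarrow> real" where
  "Rsum r m = (\<Sum>n=1..m. r n)"

definition T_pmf :: "(nat \<Rightarrow> real) \<Rightarrow> nat \<Rightarrow> nat pmf" where
  "T_pmf r m = embed_pmf (\<lambda>n. if n \<in> {1..m} then r n / Rsum r m else 0)"

text \<open>Law of tau^(m)_k = T_1 + ... + T_k with T_i i.i.d. of law T_pmf r m.\<close>
primrec tau_pmf :: "(nat \<Rightarrow> real) \<Rightarrow> nat \<Rightarrow> nat \<Rightarrow> nat pmf" where
  "tau_pmf r m 0 = return_pmf 0"
| "tau_pmf r m (Suc k) = bind_pmf (tau_pmf r m k) (\<lambda>s. map_pmf (\<lambda>t. s + t) (T_pmf r m))"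

end

theory Submission imports Defs begin

lemma Rsum_pos: assumes "\<forall>n\<ge>1. r n > 0" "m \<ge> 1" shows "Rsum r m > 0"
  unfolding Rsum_def using assms by (intro sum_pos) auto

lemma term_nn: assumes "\<forall>n\<ge>1. r n > 0" "m \<ge> 1" "j \<ge> 1" "c \<ge> 0"
  shows "0 \<le> r j / Rsum r m * c" "0 \<le> r j * c / Rsum r m" "0 \<le> r j / Rsum r m"
  using Rsum_pos[OF assms(1,2)] assms(1) assms(3) assms(4) by auto

lemma pmf_T:
  assumes rp: "\<forall>n\<ge>1. r n > 0" and m: "m \<ge> 1"
  shows "pmf (T_pmf r m) j = (if j \<in> {1..m} then r j / Rsum r m else 0)"
proof -
  have R: "Rsum r m > 0" using Rsum_pos[OF rp m] .
  let ?f = "\<lambda>n. if n \<in> {1..m} then r n / Rsum r m else 0"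
  have nn: "\<And>x. 0 \<le> ?f x" using term_nn[OF rp m] by auto
  have "(\<integral>\<^sup>+x. ennreal (?f x) \<partial>count_space UNIV) = (\<integral>\<^sup>+x. ennreal (?f x) \<partial>count_space {1..m})"
    by (subst nn_integral_count_space_indicator) (auto intro!: nn_integral_cong split: split_indicator)
  also have "\<dots> = (\<Sum>n\<in>{1..m}. ennreal (r n / Rsum r m))"
    by (subst nn_integral_count_space_finite) auto
  also have "\<dots> = ennreal (\<Sum>n\<in>{1..m}. r n / Rsum r m)"
    using term_nn[OF rp m] by (subst sum_ennreal) auto
  also have "(\<Sum>n\<in>{1..m}. r n / Rsum r m) = 1"
    using R by (simp add: sum_divide_distrib[symmetric] Rsum_def)
  finally have pr: "(\<integral>\<^sup>+x. ennreal (?f x) \<partial>count_space UNIV) = 1" by simp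
  show ?thesis unfolding T_pmf_def using pmf_embed_pmf[OF nn pr] by simp
qed

lemma set_T:
  assumes rp: "\<forall>n\<ge>1. r n > 0" and m: "m \<ge> 1"
  shows "set_pmf (T_pmf r m) = {1..m}"
  using pmf_T[OF rp m] Rsum_pos[OF rp m] rp by (auto simp: set_pmf_eq)

lemma nnT:
  assumes rp: "\<forall>n\<ge>1. r n > 0" and m: "m \<ge> 1"
  shows "(\<integral>\<^sup>+x. ennreal (exp (l * real x)) \<partial>measure_pmf (T_pmf r m))
     = ennreal (\<Sum>j=1..m. r j / Rsum r m * exp (l * real j))"
proof -
  have R: "Rsum r m > 0" using Rsum_pos[OF rp m] .
  have "(\<integral>\<^sup>+x. ennreal (exp (l * real x)) \<partial>measure_pmf (T_pmf r m))
     = (\<Sum>x\<in>{1..m}. ennreal (exp (l * real x)) * pmf (T_pmf r m) x)"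
    by (subst nn_integral_measure_pmf_finite) (auto simp: set_T[OF rp m])
  also have "\<dots> = (\<Sum>x\<in>{1..m}. ennreal (r x / Rsum r m * exp (l * real x)))"
    using term_nn[OF rp m] by (intro sum.cong) (auto simp: pmf_T[OF rp m] ennreal_mult'[symmetric] mult.commute)
  also have "\<dots> = ennreal (\<Sum>j=1..m. r j / Rsum r m * exp (l * real j))"
    using term_nn[OF rp m] by (subst sum_ennreal) auto
  finally show ?thesis .
qed

lemma nn_tau:
  assumes rp: "\<forall>n\<ge>1. r n > 0" and m: "m \<ge> 1"
  shows "(\<integral>\<^sup>+x. ennreal (exp (l * real x)) \<partial>measure_pmf (tau_pmf r m k))
     = ennreal ((\<Sum>j=1..m. r j / Rsum r m * exp (l * real j)) ^ k)"
proof (induction k)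
  case 0 then show ?case by simp
next
  case (Suc k)
  let ?M = "(\<Sum>j=1..m. r j / Rsum r m * exp (l * real j))"
  have M0: "?M \<ge> 0" using term_nn[OF rp m] by (intro sum_nonneg) auto
  have "(\<integral>\<^sup>+x. ennreal (exp (l * real x)) \<partial>measure_pmf (tau_pmf r m (Suc k)))
    = (\<integral>\<^sup>+s. (\<integral>\<^sup>+t. ennreal (exp (l * real s)) * ennreal (exp (l * real t)) \<partial>measure_pmf (T_pmf r m)) \<partial>measure_pmf (tau_pmf r m k))"
    by (simp add: ennreal_mult'[symmetric] exp_add[symmetric] algebra_simps)
  also have "\<dots> = (\<integral>\<^sup>+s. ennreal (exp (l * real s)) * ennreal ?M \<partial>measure_pmf (tau_pmf r m k))"
    by (simp add: nn_integral_cmult nnT[OF rp m])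
  also have "\<dots> = ennreal (?M ^ k) * ennreal ?M"
    by (simp add: nn_integral_multc Suc)
  also have "\<dots> = ennreal (?M ^ Suc k)" using M0 by (simp add: ennreal_mult'[symmetric] mult.commute)
  finally show ?case .
qed

lemma chernoff:
  assumes rp: "\<forall>n\<ge>1. r n > 0" and m: "m \<ge> 1" and l: "l \<ge> 0"
  shows "measure_pmf.prob (tau_pmf r m k) {n..}
     \<le> exp (- l * real n) * (\<Sum>j=1..m. r j / Rsum r m * exp (l * real j)) ^ k"
proof -
  let ?p = "measure_pmf (tau_pmf r m k)"
  let ?M = "(\<Sum>j=1..m. r j / Rsum r m * exp (l * real j))"
  have "ennreal (exp (l * real n)) * emeasure ?p {n..}
      = (\<integral>\<^sup>+x. ennreal (exp (l * real n)) * indicator {n..} x \<partial>?p)"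
    by (simp add: nn_integral_cmult)
  also have "\<dots> \<le> (\<integral>\<^sup>+x. ennreal (exp (l * real x)) \<partial>?p)"
    using l by (intro nn_integral_mono) (auto split: split_indicator intro!: ennreal_leI mult_left_mono)
  also have "\<dots> = ennreal (?M ^ k)" by (rule nn_tau[OF rp m])
  finally have "ennreal (exp (l * real n) * measure_pmf.prob (tau_pmf r m k) {n..}) \<le> ennreal (?M ^ k)"
    by (simp add: measure_pmf.emeasure_eq_measure ennreal_mult')
  hence "exp (l * real n) * measure_pmf.prob (tau_pmf r m k) {n..} \<le> ?M ^ k"
    using term_nn[OF rp m] by (subst (asm) ennreal_le_iff) (auto intro!: zero_le_power sum_nonneg)
  thus ?thesis by (simp add: exp_minus field_simps)
qed


lemma ln2_half: "ln (2::real) > 1/2"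
proof -
  have "exp (1/2::real) * exp (1/2) = exp 1" by (simp flip: exp_add)
  also have "\<dots> < 4" using exp_le by simp
  finally have h: "exp (1/2::real) * exp (1/2) < 2 * 2" by simp
  have "exp (1/2::real) < 2"
  proof (rule ccontr)
    assume "\<not> exp (1/2::real) < 2"
    hence "2 * 2 \<le> exp (1/2::real) * exp (1/2)" by (intro mult_mono) auto
    with h show False by simp
  qed
  hence "ln (exp (1/2::real)) < ln 2" by (subst ln_less_cancel_iff) auto
  thus ?thesis by simp
qed

lemma harm_ln: "(\<Sum>j=1..m. 1 / real j) \<ge> ln (real m + 1)"
proof (induction m)
  case 0 then show ?case by simp
next
  case (Suc m)
  have e1: "ln ((real m + 1) * (1 + 1 / (real m + 1))) = ln (real m + 1) + ln (1 + 1 / (real m + 1))"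
    by (rule ln_mult_pos) (auto simp: add_pos_pos)
  have e2: "(real m + 1) * (1 + 1 / (real m + 1)) = real (Suc m) + 1" by (simp add: field_simps)
  have "ln (real (Suc m) + 1) = ln (real m + 1) + ln (1 + 1 / (real m + 1))"
    using e1 e2 by simp
  also have "ln (1 + 1 / (real m + 1)) \<le> 1 / (real m + 1)" by (rule ln_add_one_self_le_self) simp
  finally show ?case using Suc by (simp add: add.commute)
qed

lemma harm_ln2: "m \<ge> 1 \<Longrightarrow> (\<Sum>j=1..m. 1 / real j) \<ge> (ln (real m) + 1) / 3"
proof -
  assume m: "m \<ge> 1"
  have "ln (real m) \<le> ln (real m + 1)" using m by simp
  moreover have "ln 2 \<le> ln (real m + 1)" using m by simp
  ultimately have "ln (real m) + 1 \<le> 3 * (\<Sum>j=1..m. 1 / real j)" using harm_ln[of m] ln2_half by linarith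
  thus ?thesis by simp
qed

lemma r_consts:
  fixes r :: "nat \<Rightarrow> real" and a :: real
  assumes rp: "\<forall>n\<ge>1. r n > 0" and a_pos: "a > 0"
    and r_asymp: "r \<sim>[at_top] (\<lambda>n. a / real n)"
  shows "\<exists>A e. A > 0 \<and> e > 0 \<and> (\<forall>j\<ge>1. r j * real j \<le> A \<and> r j * real j \<ge> e)"
proof -
  have lim: "((\<lambda>x. if r x = 0 \<and> a / real x = 0 then 1 else r x / (a / real x)) \<longlongrightarrow> 1) at_top"
    using asymp_equivD[OF r_asymp] .
  have "eventually (\<lambda>x. dist (if r x = 0 \<and> a / real x = 0 then 1 else r x / (a / real x)) 1 < 1/2) at_top"
    using tendstoD[OF lim, of "1/2"] by simp
  moreover have "eventually (\<lambda>x::nat. x \<ge> 1) at_top" by (rule eventually_ge_at_top)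
  ultimately have "eventually (\<lambda>x::nat. x \<ge> 1 \<and> dist (r x / (a / real x)) 1 < 1/2) at_top"
    by eventually_elim (use a_pos in auto)
  then obtain N where N: "\<And>x. x \<ge> N \<Longrightarrow> x \<ge> 1 \<and> dist (r x / (a / real x)) 1 < 1/2"
    unfolding eventually_at_top_linorder by blast
  have big: "a/2 \<le> r x * real x \<and> r x * real x \<le> 3*a/2" if "x \<ge> N" for x
  proof -
    from N[OF that] have x1: "x \<ge> 1" and d: "\<bar>r x * real x / a - 1\<bar> < 1/2"
      by (auto simp: dist_real_def field_simps)
    from d have "r x * real x / a \<ge> 1/2" "r x * real x / a \<le> 3/2" by linarith+
    thus ?thesis using a_pos by (simp add: field_simps)
  qed
  define S where "S = (\<lambda>j. r j * real j) ` {1..N}"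
  have Sfin: "finite S" "S \<noteq> {}" using N[of N] by (auto simp: S_def)
  have Spos: "\<forall>s\<in>S. s > 0" using rp by (auto simp: S_def)
  define e where "e = min (a/2) (Min S)"
  have epos: "e > 0" using a_pos Spos Sfin Min_in[OF Sfin] by (auto simp: e_def)
  define A where "A = 3*a/2 + (\<Sum>j=1..N. r j * real j)"
  have "A > 0" unfolding A_def using a_pos rp by (intro add_pos_nonneg sum_nonneg) (auto intro!: mult_nonneg_nonneg less_imp_le)
  moreover have "\<forall>j\<ge>1. r j * real j \<le> A \<and> r j * real j \<ge> e"
  proof (intro allI impI conjI)
    fix j :: nat assume j: "j \<ge> 1"
    show "r j * real j \<le> A"
    proof (cases "j \<le> N")
      case True
      have "r j * real j \<le> (\<Sum>i=1..N. r i * real i)"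
        using rp True j by (intro member_le_sum) (auto intro!: mult_nonneg_nonneg less_imp_le)
      thus ?thesis using a_pos by (simp add: A_def)
    next
      case False
      hence "r j * real j \<le> 3*a/2" using big by auto
      moreover have "(\<Sum>i=1..N. r i * real i) \<ge> 0" using rp by (intro sum_nonneg) (auto intro!: mult_nonneg_nonneg less_imp_le)
      ultimately show ?thesis by (simp add: A_def)
    qed
    show "r j * real j \<ge> e"
    proof (cases "j \<le> N")
      case True
      hence "r j * real j \<in> S" using j by (auto simp: S_def)
      hence "Min S \<le> r j * real j" using Sfin by simp
      thus ?thesis by (simp add: e_def)
    next
      case False
      hence "r j * real j \<ge> a/2" using big by auto
      thus ?thesis by (simp add: e_def)
    qed
  qed
  ultimately show ?thesis using epos by blast
qed


lemma geom:
  fixes l :: real assumes l: "l > 0" and m: "m \<ge> 1"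
  shows "(\<Sum>j=1..m. exp (l * real j)) \<le> exp (l * real m) * (1 + l) / l"
proof -
  define x where "x = exp l"
  define G where "G = (\<Sum>j=1..m. exp (l * real j))"
  have G: "G = (\<Sum>j=1..m. x ^ j)" unfolding G_def x_def
    by (intro sum.cong) (auto simp: exp_of_nat_mult[symmetric] mult.commute)
  have "(1 - x) * G = x ^ 1 - x ^ Suc m" unfolding G using sum_gp_multiplied[of 1 m x] m by simp
  hence "(x - 1) * G = x * x ^ m - x" by (simp add: algebra_simps)
  also have "x ^ m = exp (l * real m)" by (simp add: x_def exp_of_nat_mult[symmetric] mult.commute)
  finally have e: "(x - 1) * G \<le> x * exp (l * real m)" using x_def by simp
  have x1: "x \<ge> 1 + l" unfolding x_def by (rule exp_ge_add_one_self)
  have G0: "G \<ge> 0" unfolding G_def by (intro sum_nonneg) auto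
  have xp: "x > 0" by (simp add: x_def)
  have "l * x / (1 + l) \<le> x - 1" using x1 l by (simp add: field_simps)
  hence "l * x / (1 + l) * G \<le> x * exp (l * real m)" using e G0 mult_right_mono[of "l * x / (1 + l)" "x - 1" G] by linarith
  hence "x * (l * G / (1 + l)) \<le> x * exp (l * real m)" by (simp add: field_simps)
  hence "l * G / (1 + l) \<le> exp (l * real m)" using xp by (simp add: times_divide_eq_right[symmetric] del: times_divide_eq_right)
  thus ?thesis using l unfolding G_def by (simp add: field_simps)
qed

lemma exp_m1: "u \<ge> 0 \<Longrightarrow> exp u - 1 \<le> u * exp (u::real)"
proof -
  assume u: "u \<ge> 0"
  have "1 - u \<le> exp (-u)" using exp_ge_add_one_self[of "-u"] by simp
  hence "(1 - u) * exp u \<le> exp (-u) * exp u" by (intro mult_right_mono) auto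
  thus ?thesis by (simp add: exp_minus field_simps)
qed

lemma pointwise:
  fixes l L :: real
  assumes m: "m \<ge> 1" and l: "l > 0" and L: "L = l * real m" and j: "1 \<le> j" "j \<le> m"
  shows "(exp (l * real j) - 1) / real j \<le> 2 * exp (l * real j) / real m + l * exp (L / 2)"
proof (cases "2 * j > m")
  case True
  have "(exp (l * real j) - 1) / real j \<le> exp (l * real j) / real j" using j by (simp add: divide_right_mono)
  also have "\<dots> \<le> exp (l * real j) / (real m / 2)"
    using True j by (intro divide_left_mono) auto
  also have "\<dots> = 2 * exp (l * real j) / real m" by simp
  finally have a: "(exp (l * real j) - 1) / real j \<le> 2 * exp (l * real j) / real m" .
  moreover have "0 \<le> l * exp (L / 2)" using l by simp
  ultimately show ?thesis by linarith
next
  case False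
  have "(exp (l * real j) - 1) / real j \<le> (l * real j) * exp (l * real j) / real j"
    using exp_m1[of "l * real j"] l j by (intro divide_right_mono) auto
  also have "\<dots> = l * exp (l * real j)" using j by simp
  also have "\<dots> \<le> l * exp (L / 2)" using False l L by (intro mult_left_mono) (auto simp: field_simps)
  finally have a: "(exp (l * real j) - 1) / real j \<le> l * exp (L / 2)" .
  moreover have "0 \<le> 2 * exp (l * real j) / real m" by simp
  ultimately show ?thesis by linarith
qed

lemma sq_exp: "(L::real) \<ge> 0 \<Longrightarrow> L * L \<le> 16 * exp (L / 2)"
proof -
  assume L: "L \<ge> 0"
  have "1 + L/4 \<le> exp (L/4)" by (rule exp_ge_add_one_self)
  hence "(1 + L/4) * (1 + L/4) \<le> exp (L/4) * exp (L/4)" using L by (intro mult_mono) auto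
  also have "exp (L/4) * exp (L/4) = exp (L/2)" by (simp flip: exp_add)
  finally have a: "(1 + L/4) * (1 + L/4) \<le> exp (L/2)" .
  have "16*((1+L/4)*(1+L/4)) = L*L + 8*L + 16" by (simp add: algebra_simps)
  thus ?thesis using a L by linarith
qed

lemma sumexp:
  fixes l L :: real
  assumes m: "m \<ge> 1" and l: "l > 0" and L: "L = l * real m" and L1: "1 \<le> L" and Lm: "L \<le> real m"
  shows "(\<Sum>j=1..m. (exp (l * real j) - 1) / real j) \<le> 20 * exp L / L"
proof -
  have "(\<Sum>j=1..m. (exp (l * real j) - 1) / real j)
      \<le> (\<Sum>j=1..m. 2 * exp (l * real j) / real m + l * exp (L / 2))"
    by (intro sum_mono pointwise[OF m l L]) auto
  also have "\<dots> = 2 / real m * (\<Sum>j=1..m. exp (l * real j)) + real m * l * exp (L / 2)"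
    by (simp add: sum.distrib sum_distrib_left sum_divide_distrib)
  also have "\<dots> \<le> 2 / real m * (exp L * (1 + l) / l) + L * exp (L / 2)"
    using geom[OF l m] m L by (intro add_mono mult_left_mono) (auto simp: mult.commute)
  also have "2 / real m * (exp L * (1 + l) / l) = 2 * exp L * (1 / real m + 1 / L)"
    using L m l by (simp add: field_simps)
  also have "\<dots> \<le> 2 * exp L * (2 / L)"
    using L1 Lm by (intro mult_left_mono) (auto simp: field_simps)
  also have "L * exp (L / 2) \<le> 16 * exp L / L"
  proof -
    have "L * L * exp (L/2) \<le> 16 * exp (L/2) * exp (L/2)"
      using sq_exp[of L] L1 by (intro mult_right_mono) auto
    also have "16 * exp (L/2) * exp (L/2) = 16 * exp L" by (simp add: mult.assoc flip: exp_add)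
    finally have "L * L * exp (L/2) \<le> 16 * exp L" .
    thus ?thesis using L1 by (simp add: field_simps)
  qed
  finally show ?thesis using L1 by (simp add: field_simps)
qed


lemma set_tau:
  assumes rp: "\<forall>n\<ge>1. r n > 0" and m: "m \<ge> 1"
  shows "x \<in> set_pmf (tau_pmf r m k) \<Longrightarrow> x \<le> k * m"
proof (induction k arbitrary: x)
  case 0 then show ?case by simp
next
  case (Suc k)
  from Suc.prems obtain s t where "s \<in> set_pmf (tau_pmf r m k)" "t \<in> set_pmf (T_pmf r m)" "x = s + t"
    by auto
  moreover have "t \<in> {1..m}" using \<open>t \<in> set_pmf (T_pmf r m)\<close> set_T[OF rp m] by blast
  ultimately have "s \<in> set_pmf (tau_pmf r m k)" "t \<le> m" "x = s + t" by auto
  with Suc.IH show ?case by fastforce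
qed

lemma Rsum_lower:
  assumes rp: "\<forall>n\<ge>1. r n > 0" and m: "m \<ge> 1" and e: "\<forall>j\<ge>1. r j * real j \<ge> e"
  shows "Rsum r m \<ge> e * (ln (real m) + 1) / 3"
proof -
  have "e * (\<Sum>j=1..m. 1 / real j) = (\<Sum>j=1..m. e / real j)" by (simp add: sum_distrib_left)
  also have "\<dots> \<le> (\<Sum>j=1..m. r j)"
  proof (intro sum_mono)
    fix j assume "j \<in> {1..m}"
    hence "j \<ge> 1" by simp
    with e have "e \<le> r j * real j" by auto
    thus "e / real j \<le> r j" using \<open>j \<ge> 1\<close> by (simp add: field_simps)
  qed
  finally have h: "e * (\<Sum>j=1..m. 1 / real j) \<le> Rsum r m" by (simp add: Rsum_def)
  show ?thesis
  proof (cases "e \<ge> 0")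
    case True
    have "e * ((ln (real m) + 1) / 3) \<le> e * (\<Sum>j=1..m. 1 / real j)"
      using harm_ln2[OF m] True by (intro mult_left_mono) auto
    with h show ?thesis by simp
  next
    case False
    have "Rsum r m \<ge> 0" using Rsum_pos[OF rp m] by simp
    moreover have "e * (ln (real m) + 1) / 3 \<le> 0" using False m by (intro divide_nonpos_pos mult_nonpos_nonneg) auto
    ultimately show ?thesis by linarith
  qed
qed


theorem mainTheorem14:
  fixes r :: "nat \<Rightarrow> real" and a :: real
  assumes r_pos: "\<And>n. n \<ge> 1 \<Longrightarrow> r n > 0"
    and a_pos: "a > 0"
    and r_asymp: "r \<sim>[at_top] (\<lambda>n. a / real n)"
  shows "\<exists>C::real. C > 1 \<and>
    (\<forall>m n k :: nat. m \<ge> 1 \<longrightarrow> n \<ge> 1 \<longrightarrow> k \<ge> 1 \<longrightarrow>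
      measure_pmf.prob (tau_pmf r m k) {n..}
        \<le> (min (C * real k * real m / (real n * (ln (real m) + 1))) 1) powr (real n / real m))"
proof -
  have rp: "\<forall>n\<ge>1. r n > 0" using r_pos by auto
  obtain A0 e where A0: "A0 > 0" and e: "e > 0" and Ae: "\<forall>j\<ge>1. r j * real j \<le> A0 \<and> r j * real j \<ge> e"
    using r_consts[OF rp a_pos r_asymp] by blast
  define A where "A = A0 + e"
  have Apos: "A > 0" and Ae': "A \<ge> e" using A0 e by (auto simp: A_def)
  have rA: "r j \<le> A / real j" if "j \<ge> 1" for j
    using Ae that A0 e by (auto simp: A_def field_simps)
  have Rlow: "Rsum r m \<ge> e / 3 * (ln (real m) + 1)" if "m \<ge> 1" for m
    using Rsum_lower[OF rp that] Ae by auto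
  define B where "B = 20 * A / (e / 3)"
  have B1: "B \<ge> 1" using Ae' e by (simp add: B_def field_simps)
  define C where "C = exp 1 * B"
  have C1: "C > 1" unfolding C_def using B1 by (smt (verit) exp_gt_one mult_le_cancel_left1 zero_less_one)
  have "\<forall>m n k :: nat. m \<ge> 1 \<longrightarrow> n \<ge> 1 \<longrightarrow> k \<ge> 1 \<longrightarrow>
      measure_pmf.prob (tau_pmf r m k) {n..}
        \<le> (min (C * real k * real m / (real n * (ln (real m) + 1))) 1) powr (real n / real m)"
  proof (intro allI impI)
    fix m n k :: nat assume m: "m \<ge> 1" and n: "n \<ge> 1" and k: "k \<ge> 1"
    define y where "y = real k * real m / (real n * (ln (real m) + 1))"
    have lm0: "ln (real m) \<ge> 0" using m by simp
    have ypos: "y > 0" using m n k lm0 by (simp add: y_def add_nonneg_pos)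
    have Cy: "C * real k * real m / (real n * (ln (real m) + 1)) = C * y" by (simp add: y_def)
    let ?P = "measure_pmf.prob (tau_pmf r m k) {n..}"
    have "?P \<le> (min (C * y) 1) powr (real n / real m)"
    proof (cases "C * y \<ge> 1")
      case True
      thus ?thesis by (simp add: measure_pmf.prob_le_1)
    next
      case False
      hence Cy1: "C * y < 1" by simp
      show ?thesis
      proof (cases "n > k * m")
        case True
        have "?P = 0" unfolding measure_pmf_zero_iff
          using set_tau[OF rp m, of _ k] True by fastforce
        thus ?thesis by simp
      next
        case False
        hence nkm: "real n \<le> real k * real m" by (simp flip: of_nat_mult)
        define L where "L = ln (1 / (B * y))"
        define l where "l = L / real m"
        have By: "B * y > 0" using B1 ypos by simp
        have By_e: "B * y < exp (-1)" using Cy1 by (simp add: C_def exp_minus field_simps)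
        have L1: "L > 1"
        proof -
          have "1 / (B*y) > exp 1" using By_e By by (simp add: exp_minus field_simps)
          hence "ln (exp 1) < ln (1 / (B*y))" using By by (subst ln_less_cancel_iff) auto
          thus ?thesis by (simp add: L_def)
        qed
        have eL: "exp L = 1 / (B * y)" using By by (simp add: L_def)
        have q: "real k * real m / real n \<ge> 1" using nkm n by (simp add: field_simps)
        have yeq: "y = (real k * real m / real n) * (1 / (ln (real m) + 1))" by (simp add: y_def)
        have y_low: "y \<ge> 1 / (ln (real m) + 1)"
          unfolding yeq using mult_right_mono[OF q, of "1 / (ln (real m) + 1)"] lm0 by simp
        have Lm: "L \<le> real m"
        proof -
          have "B * y \<ge> 1 / (ln (real m) + 1)"
            using y_low B1 ypos lm0 by (smt (verit) divide_pos_pos mult_le_cancel_right1)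
          hence "1 / (B * y) \<le> ln (real m) + 1" using By lm0 by (simp add: field_simps)
          hence "L \<le> ln (ln (real m) + 1)" unfolding L_def using By lm0 by (subst ln_le_cancel_iff) auto
          also have "\<dots> \<le> ln (real m)" using ln_le_minus_one[of "ln (real m) + 1"] lm0 by simp
          also have "\<dots> \<le> real m - 1" using ln_le_minus_one[of "real m"] m by simp
          finally show ?thesis by simp
        qed
        have lpos: "l > 0" using L1 m by (simp add: l_def)
        have Ll: "L = l * real m" using m by (simp add: l_def)
        let ?M = "\<Sum>j=1..m. r j / Rsum r m * exp (l * real j)"
        have R: "Rsum r m > 0" using Rsum_pos[OF rp m] .
        have sum1: "(\<Sum>j=1..m. r j / Rsum r m) = 1" using R
          by (simp add: sum_divide_distrib[symmetric] Rsum_def)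
        have "?M = (\<Sum>j=1..m. r j / Rsum r m) + (\<Sum>j=1..m. r j / Rsum r m * (exp (l * real j) - 1))"
          by (simp add: sum.distrib[symmetric] algebra_simps)
        also have "(\<Sum>j=1..m. r j / Rsum r m * (exp (l * real j) - 1))
            \<le> (\<Sum>j=1..m. A / Rsum r m * ((exp (l * real j) - 1) / real j))"
        proof (intro sum_mono)
          fix j assume j: "j \<in> {1..m}"
          have ex: "exp (l * real j) - 1 \<ge> 0" using lpos by simp
          have "r j / Rsum r m \<le> A / real j / Rsum r m" using rA[of j] j R by (intro divide_right_mono) auto
          hence "r j / Rsum r m * (exp (l * real j) - 1) \<le> A / real j / Rsum r m * (exp (l * real j) - 1)"
            using ex by (rule mult_right_mono)
          thus "r j / Rsum r m * (exp (l * real j) - 1) \<le> A / Rsum r m * ((exp (l * real j) - 1) / real j)"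
            by (simp add: field_simps)
        qed
        also have "(\<Sum>j=1..m. A / Rsum r m * ((exp (l * real j) - 1) / real j))
            = A / Rsum r m * (\<Sum>j=1..m. (exp (l * real j) - 1) / real j)" by (simp add: sum_distrib_left)
        also have "\<dots> \<le> A / Rsum r m * (20 * exp L / L)"
          using sumexp[OF m lpos Ll _ Lm] L1 Apos R by (intro mult_left_mono) auto
        also have "\<dots> \<le> A / (e / 3 * (ln (real m) + 1)) * (20 * exp L / L)"
          using Rlow[OF m] Apos L1 e lm0 R
          by (intro mult_right_mono divide_left_mono) (auto intro!: mult_pos_pos add_nonneg_pos)
        also have "\<dots> = B * exp L / ((ln (real m) + 1) * L)"
          using e lm0 L1 by (simp add: B_def field_simps)
        finally have Mle: "?M \<le> 1 + B * exp L / ((ln (real m) + 1) * L)" using sum1 by simp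
        define X where "X = B * exp L / ((ln (real m) + 1) * L)"
        have M0: "?M \<ge> 0" using term_nn[OF rp m] by (intro sum_nonneg) auto
        have "?M \<le> exp X" using Mle exp_ge_add_one_self[of X] unfolding X_def by linarith
        hence Mk: "?M ^ k \<le> exp X ^ k" using M0 by (intro power_mono)
        have k1: "real k * X = real k / (y * (ln (real m) + 1) * L)"
          unfolding X_def eL using By L1 lm0 B1 ypos by (simp add: field_simps)
        have cne: "ln (real m) + 1 \<noteq> 0" using lm0 by linarith
        have k2: "y * (ln (real m) + 1) = real k * real m / real n"
          unfolding y_def using cne by simp
        have kX: "real k * X = real n / real m / L"
          unfolding k1 k2 using L1 n m k by (simp add: field_simps)
        have "?P \<le> exp (- l * real n) * ?M ^ k" by (rule chernoff[OF rp m]) (use lpos in simp)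
        also have "\<dots> \<le> exp (- l * real n) * exp X ^ k" by (rule mult_left_mono[OF Mk]) simp
        also have "\<dots> = exp (- l * real n + real k * X)" by (simp add: exp_of_nat_mult[symmetric] mult.commute flip: exp_add)
        also have "- l * real n + real k * X = real n / real m * (- L + 1 / L)"
          unfolding kX l_def using m L1 by (simp add: field_simps)
        also have "exp \<dots> \<le> exp (real n / real m * (1 - L))"
          using L1 m n by (simp add: mult_left_mono field_simps)
        also have "1 - L = ln (C * y)"
        proof -
          have "ln (C*y) = ln (exp 1 * (B*y))" by (simp add: C_def mult.assoc)
          also have "\<dots> = ln (exp 1) + ln (B*y)" using By by (intro ln_mult_pos) auto
          finally have h1: "ln (C*y) = 1 + ln (B*y)" by simp
          have "L = - ln (B*y)" using By B1 ypos by (simp add: L_def ln_div)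
          with h1 show ?thesis by simp
        qed
        also have "exp (real n / real m * ln (C * y)) = (C * y) powr (real n / real m)"
          using By B1 ypos C1 by (simp add: powr_def mult.commute)
        also have "\<dots> = (min (C * y) 1) powr (real n / real m)" using Cy1 by simp
        finally show ?thesis .
      qed
    qed
    thus "?P \<le> (min (C * real k * real m / (real n * (ln (real m) + 1))) 1) powr (real n / real m)"
      by (simp only: Cy)
  qed
  thus ?thesis using C1 by blast
qed

end
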